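(* Let $A=B\wr_Q\mathcal{H}(d)$ be a quantum wreath product whose parameters $Q=(R,S,\rho,\sigma)$ satisfy: $\sigma$ is the flip $a\otimes b\mapsto b\otimes a$, $\rho=0$, and Conditions (C1)–(C9) hold. Let $V_B$ be a right $B$-module with $K$-basis $\{v_i\}_{i\in I}$, $I$ totally ordered, let $V_B^{\otimes d}$ be a right $B^{\otimes d}$-module via the factorwise action, let $\mu\in I^d$ with $\mu_1<\cdots<\mu_d$, and let $W$ be the $B^{\otimes d}$-submodule of $V_B^{\otimes d}$ generated by $\{v_{\mu\cdot g}\mid g\in\Sigma_d\}$. Consider the rule, for $\nu\in\{\mu\cdot g\mid g\in\Sigma_d\}$ and $1\le i\le d-1$: $v_\nu.H_i=v_{\nu\cdot s_i}$ if $\nu_i<\nu_{i+1}$, and $v_\nu.H_i=v_{\nu\cdot s_i}.R_i+v_\nu.S_i$ if $\nu_i>\nu_{i+1}$. (a) If $B$ acts on $V_B$ through a counit $\epsilon:B\to K$ (i.e. $v.b=\epsilon(b)v$), and there is $r\in K$ with $r^2=\epsilon(S)r+\epsilon(R)$, then this rule, together with the action of $B^{\otimes d}$, extends to a right $A$-module structure on $W$. (b) If $S=0$ and $R=1\otimes1$, then this rule, together with the action of $B^{\otimes d}$, extends to a right $A$-module structure on $W$.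
   Context: $K$ commutative ring, $B$ associative unital $K$-algebra free over $K$, $d\ge2$, tensor products over $K$. For $Z\in B\otimes B$, $Z_i:=1^{\otimes(i-1)}\otimes Z\otimes1^{\otimes(d-i-1)}$; $\phi_i$ applies $\phi\in\operatorname{End}_K(B\otimes B)$ to tensor factors $i,i+1$. $B\wr_Q\mathcal{H}(d)$: $K$-algebra generated by the algebra $B^{\otimes d}$ and $H_1,\dots,H_{d-1}$ with $H_kH_{k+1}H_k=H_{k+1}H_kH_{k+1}$, $H_iH_j=H_jH_i$ ($|i-j|\ge2$), $H_i^2=S_iH_i+R_i$, $H_ib=\sigma_i(b)H_i+\rho_i(b)$. With $\sigma$ the flip and $\rho=0$, Conditions (C1)–(C9) amount to (and are implied by) $\sigma(R)=R$, $(\sigma(S)-S)R=0$, and $Sx=\sigma(x)S$... more precisely they are: (C1) $\sigma(1\otimes1)=1\otimes1$; (C2) $\sigma$ multiplicative; (C3) $\sigma(S)S+\sigma(R)=S^2+R$, $\sigma(S)R=SR$; (C4) $\sigma^2(a)S=S\sigma(a)$ and $\sigma^2(a)R=Ra$ for all $a\in B\otimes B$; (C5) $\sigma_1\sigma_2\sigma_1=\sigma_2\sigma_1\sigma_2$ on $B^{\otimes3}$; (C8) $S_i=\sigma_j\sigma_i(S_j)$, $R_i=\sigma_j\sigma_i(R_j)$ in $B^{\otimes3}$ for $\{i,j\}=\{1,2\}$ (the remaining conditions (C6),(C7),(C9) being trivial when $\rho=0$). $v_\nu:=v_{\nu_1}\otimes\cdots\otimes v_{\nu_d}$; $\Sigma_d$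 acts on $I^d$ by place permutations, $\nu\cdot s_i$ swapping entries $i,i+1$. For $X\in B\otimes B$, $\epsilon(X):=(\epsilon\otimes\epsilon)(X)$. *)

theory Defs
  imports "HOL-Combinatorics.Permutations"
begin

text \<open>Free K-modules are modelled as finitely supported coefficient functions
  on a basis type.  B is a free K-algebra with basis indexed by 'x, given by its
  structure constants m (m x y = e_x e_y) and its unit u.  The tensor power
  B^{\<otimes>n} is free with basis the lists of basis indices of length n; similarly
  V^{\<otimes>d} is free with basis I^d (lists of length d).\<close>

definition supp :: "('a \<Rightarrow> 'k::zero) \<Rightarrow> 'a set" where
  "supp p = {a. p a \<noteq> 0}"

definition fsupp :: "('a \<Rightarrow> 'k::zero) \<Rightarrow> bool" where
  "fsupp p \<longleftrightarrow> finite (supp p)"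

definition delta :: "'a \<Rightarrow> 'a \<Rightarrow> 'k::{zero,one}" where
  "delta a = (\<lambda>b. if b = a then 1 else 0)"

definition linext :: "('a \<Rightarrow> 'b \<Rightarrow> 'k::comm_ring_1) \<Rightarrow> ('a \<Rightarrow> 'k) \<Rightarrow> 'b \<Rightarrow> 'k" where
  "linext f p = (\<lambda>b. \<Sum>a\<in>supp p. p a * f a b)"

definition bilin :: "('a \<Rightarrow> 'c \<Rightarrow> 'b \<Rightarrow> 'k::comm_ring_1) \<Rightarrow> ('a \<Rightarrow> 'k) \<Rightarrow> ('c \<Rightarrow> 'k) \<Rightarrow> 'b \<Rightarrow> 'k" where
  "bilin f p q = (\<lambda>b. \<Sum>a\<in>supp p. \<Sum>c\<in>supp q. p a * q c * f a c b)"

definition free_algebra :: "('x \<Rightarrow> 'x \<Rightarrow> 'x \<Rightarrow> 'k::comm_ring_1) \<Rightarrow> ('x \<Rightarrow> 'k) \<Rightarrow> bool" where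
  "free_algebra m u \<longleftrightarrow> fsupp u \<and> (\<forall>x y. fsupp (m x y)) \<and>
     (\<forall>x y z. linext (\<lambda>w. m w z) (m x y) = linext (m x) (m y z)) \<and>
     (\<forall>x. linext (\<lambda>w. m w x) u = delta x \<and> linext (m x) u = delta x)"

text \<open>Right B-module V, free over K with basis 'i; va i x = v_i . e_x.\<close>
definition right_module :: "('x \<Rightarrow> 'x \<Rightarrow> 'x \<Rightarrow> 'k::comm_ring_1) \<Rightarrow> ('x \<Rightarrow> 'k) \<Rightarrow>
    ('i \<Rightarrow> 'x \<Rightarrow> 'i \<Rightarrow> 'k) \<Rightarrow> bool" where
  "right_module m u va \<longleftrightarrow> (\<forall>i x. fsupp (va i x)) \<and>
     (\<forall>i. linext (va i) u = delta i) \<and>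
     (\<forall>i x y. linext (\<lambda>j. va j y) (va i x) = linext (va i) (m x y))"

definition tens :: "('x \<Rightarrow> 'k::comm_ring_1) list \<Rightarrow> 'x list \<Rightarrow> 'k" where
  "tens vs = (\<lambda>xs. if length xs = length vs then (\<Prod>k<length vs. (vs ! k) (xs ! k)) else 0)"

definition tpow :: "nat \<Rightarrow> ('x list \<Rightarrow> 'k::zero) set" where
  "tpow n = {p. fsupp p \<and> (\<forall>xs. p xs \<noteq> 0 \<longrightarrow> length xs = n)}"

definition tmul :: "('x \<Rightarrow> 'x \<Rightarrow> 'x \<Rightarrow> 'k::comm_ring_1) \<Rightarrow> ('x list \<Rightarrow> 'k) \<Rightarrow> ('x list \<Rightarrow> 'k) \<Rightarrow> 'x list \<Rightarrow> 'k" where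
  "tmul m p q = bilin (\<lambda>xs ys. tens (map2 m xs ys)) p q"

definition tone :: "('x \<Rightarrow> 'k::comm_ring_1) \<Rightarrow> nat \<Rightarrow> 'x list \<Rightarrow> 'k" where
  "tone u n = tens (replicate n u)"

text \<open>Swap of entries i and i+1 (1-based) of a list: the place permutation by s_i.\<close>
definition swp :: "nat \<Rightarrow> 'a list \<Rightarrow> 'a list" where
  "swp i xs = xs[i - 1 := xs ! i, i := xs ! (i - 1)]"

text \<open>sigma_i for sigma the flip: swap tensor factors i and i+1.\<close>
definition sig :: "nat \<Rightarrow> ('a list \<Rightarrow> 'k) \<Rightarrow> 'a list \<Rightarrow> 'k" where
  "sig i p = (\<lambda>xs. p (swp i xs))"

text \<open>Z_i = 1^{\<otimes>(i-1)} \<otimes> Z \<otimes> 1^{\<otimes>(d-i-1)} in B^{\<otimes>d}, for Z in B \<otimes> B.\<close>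
definition emb :: "('x \<Rightarrow> 'k::comm_ring_1) \<Rightarrow> nat \<Rightarrow> nat \<Rightarrow> ('x list \<Rightarrow> 'k) \<Rightarrow> 'x list \<Rightarrow> 'k" where
  "emb u d i Z = (\<lambda>xs. if length xs = d
       then (\<Prod>k\<in>{..<d} - {i - 1, i}. u (xs ! k)) * Z [xs ! (i - 1), xs ! i] else 0)"

definition eps2 :: "('x \<Rightarrow> 'k::comm_ring_1) \<Rightarrow> ('x list \<Rightarrow> 'k) \<Rightarrow> 'k" where
  "eps2 \<epsilon> X = (\<Sum>xs\<in>supp X. X xs * \<epsilon> (xs ! 0) * \<epsilon> (xs ! 1))"

definition alg_hom_to_K :: "('x \<Rightarrow> 'x \<Rightarrow> 'x \<Rightarrow> 'k::comm_ring_1) \<Rightarrow> ('x \<Rightarrow> 'k) \<Rightarrow> ('x \<Rightarrow> 'k) \<Rightarrow> bool" where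
  "alg_hom_to_K m u \<epsilon> \<longleftrightarrow> (\<Sum>w\<in>supp u. u w * \<epsilon> w) = 1 \<and>
     (\<forall>x y. (\<Sum>w\<in>supp (m x y). m x y w * \<epsilon> w) = \<epsilon> x * \<epsilon> y)"

definition tact :: "('i \<Rightarrow> 'x \<Rightarrow> 'i \<Rightarrow> 'k::comm_ring_1) \<Rightarrow> ('i list \<Rightarrow> 'k) \<Rightarrow> ('x list \<Rightarrow> 'k) \<Rightarrow> 'i list \<Rightarrow> 'k" where
  "tact va w b = bilin (\<lambda>\<nu> xs. tens (map2 va \<nu> xs)) w b"

text \<open>Conditions (C1)-(C9) for Q = (R,S,0,flip).  (C1),(C2),(C5) hold automatically
  for the flip and (C6),(C7),(C9) are trivial for rho = 0.\<close>
definition qwp_flip_conditions :: "('x \<Rightarrow> 'x \<Rightarrow> 'x \<Rightarrow> 'k::comm_ring_1) \<Rightarrow> ('x \<Rightarrow> 'k) \<Rightarrow>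
    ('x list \<Rightarrow> 'k) \<Rightarrow> ('x list \<Rightarrow> 'k) \<Rightarrow> bool" where
  "qwp_flip_conditions m u S R \<longleftrightarrow> S \<in> tpow 2 \<and> R \<in> tpow 2 \<and>
     \<comment> \<open>(C3)\<close>
     (\<lambda>xs. tmul m (sig 1 S) S xs + sig 1 R xs) = (\<lambda>xs. tmul m S S xs + R xs) \<and>
     tmul m (sig 1 S) R = tmul m S R \<and>
     \<comment> \<open>(C4)\<close>
     (\<forall>a\<in>tpow 2. tmul m (sig 1 (sig 1 a)) S = tmul m S (sig 1 a) \<and>
                 tmul m (sig 1 (sig 1 a)) R = tmul m R a) \<and>
     \<comment> \<open>(C8)\<close>
     emb u 3 1 S = sig 2 (sig 1 (emb u 3 2 S)) \<and> emb u 3 2 S = sig 1 (sig 2 (emb u 3 1 S)) \<and>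
     emb u 3 1 R = sig 2 (sig 1 (emb u 3 2 R)) \<and> emb u 3 2 R = sig 1 (sig 2 (emb u 3 1 R))"

definition orbit :: "nat \<Rightarrow> 'i list \<Rightarrow> 'i list set" where
  "orbit d \<mu> = {map (\<lambda>k. \<mu> ! g k) [0..<d] | g. g permutes {..<d}}"

definition Wsub :: "('i \<Rightarrow> 'x \<Rightarrow> 'i \<Rightarrow> 'k::comm_ring_1) \<Rightarrow> nat \<Rightarrow> 'i list \<Rightarrow> ('i list \<Rightarrow> 'k) set" where
  "Wsub va d \<mu> = {(\<lambda>\<rho>. \<Sum>\<nu>\<in>orbit d \<mu>. tact va (delta \<nu>) (p \<nu>) \<rho>) | p. \<forall>\<nu>. p \<nu> \<in> tpow d}"

text \<open>Operators h_i (the action of H_i) on W, which together with the given action of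
  B^{\<otimes>d} define a right module over the algebra B \<wr>_Q H(d) presented by generators
  B^{\<otimes>d}, H_1..H_{d-1} and its defining relations (for sigma the flip, rho = 0).\<close>
definition qwp_module_on :: "('x \<Rightarrow> 'k::comm_ring_1) \<Rightarrow> ('i \<Rightarrow> 'x \<Rightarrow> 'i \<Rightarrow> 'k) \<Rightarrow> nat \<Rightarrow>
    ('x list \<Rightarrow> 'k) \<Rightarrow> ('x list \<Rightarrow> 'k) \<Rightarrow> ('i list \<Rightarrow> 'k) set \<Rightarrow>
    (nat \<Rightarrow> ('i list \<Rightarrow> 'k) \<Rightarrow> 'i list \<Rightarrow> 'k) \<Rightarrow> bool" where
  "qwp_module_on u va d S R W h \<longleftrightarrow>
     (\<forall>i\<in>{1..<d}. \<forall>w\<in>W. h i w \<in> W) \<and>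
     (\<forall>i\<in>{1..<d}. \<forall>w\<in>W. \<forall>w'\<in>W. h i (\<lambda>\<nu>. w \<nu> + w' \<nu>) = (\<lambda>\<nu>. h i w \<nu> + h i w' \<nu>)) \<and>
     (\<forall>i\<in>{1..<d}. \<forall>w\<in>W. \<forall>c. h i (\<lambda>\<nu>. c * w \<nu>) = (\<lambda>\<nu>. c * h i w \<nu>)) \<and>
     \<comment> \<open>H_i b = \<sigma>_i(b) H_i\<close>
     (\<forall>i\<in>{1..<d}. \<forall>w\<in>W. \<forall>b\<in>tpow d. tact va (h i w) b = h i (tact va w (sig i b))) \<and>
     \<comment> \<open>H_i^2 = S_i H_i + R_i\<close>
     (\<forall>i\<in>{1..<d}. \<forall>w\<in>W. h i (h i w) =
        (\<lambda>\<nu>. h i (tact va w (emb u d i S)) \<nu> + tact va w (emb u d i R) \<nu>)) \<and>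
     \<comment> \<open>braid relations\<close>
     (\<forall>k. 1 \<le> k \<and> k + 1 < d \<longrightarrow>
        (\<forall>w\<in>W. h k (h (k + 1) (h k w)) = h (k + 1) (h k (h (k + 1) w)))) \<and>
     \<comment> \<open>far commutation\<close>
     (\<forall>i\<in>{1..<d}. \<forall>j\<in>{1..<d}. (i + 2 \<le> j \<or> j + 2 \<le> i) \<longrightarrow>
        (\<forall>w\<in>W. h i (h j w) = h j (h i w)))"

definition qwp_rule :: "('x \<Rightarrow> 'k::comm_ring_1) \<Rightarrow> ('i::linorder \<Rightarrow> 'x \<Rightarrow> 'i \<Rightarrow> 'k) \<Rightarrow> nat \<Rightarrow> 'i list \<Rightarrow>
    ('x list \<Rightarrow> 'k) \<Rightarrow> ('x list \<Rightarrow> 'k) \<Rightarrow> (nat \<Rightarrow> ('i list \<Rightarrow> 'k) \<Rightarrow> 'i list \<Rightarrow> 'k) \<Rightarrow> bool" where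
  "qwp_rule u va d \<mu> S R h \<longleftrightarrow>
     (\<forall>i\<in>{1..<d}. \<forall>\<nu>\<in>orbit d \<mu>.
        (\<nu> ! (i - 1) < \<nu> ! i \<longrightarrow> h i (delta \<nu>) = delta (swp i \<nu>)) \<and>
        (\<nu> ! i < \<nu> ! (i - 1) \<longrightarrow> h i (delta \<nu>) =
           (\<lambda>\<rho>. tact va (delta (swp i \<nu>)) (emb u d i R) \<rho> + tact va (delta \<nu>) (emb u d i S) \<rho>)))"

definition extends_to_qwp_module where
  "extends_to_qwp_module u va d \<mu> S R \<longleftrightarrow>
     (\<exists>h. qwp_module_on u va d S R (Wsub va d \<mu>) h \<and> qwp_rule u va d \<mu> S R h)"

end

theory Submission
  imports Defs
begin


lemma prod_sum_lists:
  fixes f :: "nat \<Rightarrow> 'a \<Rightarrow> 'k::comm_semiring_1" assumes "finite A"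
  shows "(\<Sum>xs\<in>{xs. set xs \<subseteq> A \<and> length xs = n}. \<Prod>k<n. f k (xs!k)) = (\<Prod>k<n. \<Sum>x\<in>A. f k x)"
proof (induct n arbitrary: f)
  case 0 then show ?case by (simp cong: conj_cong)
next
  case (Suc n)
  have *: "{xs. set xs \<subseteq> A \<and> length xs = Suc n} =
    (\<lambda>(xs, x). x#xs) ` ({xs. set xs \<subseteq> A \<and> length xs = n} \<times> A)"
    by (auto simp: image_iff length_Suc_conv)
  have inj: "inj_on (\<lambda>(xs, x). x#xs) ({xs. set xs \<subseteq> A \<and> length xs = n} \<times> A)"
    by (auto simp: inj_on_def)
  have "(\<Sum>xs\<in>{xs. set xs \<subseteq> A \<and> length xs = Suc n}. \<Prod>k<Suc n. f k (xs!k))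
     = (\<Sum>(xs,x)\<in>{xs. set xs \<subseteq> A \<and> length xs = n} \<times> A. f 0 x * (\<Prod>k<n. f (Suc k) (xs!k)))"
    unfolding * by (subst sum.reindex[OF inj]) (simp add: prod.lessThan_Suc_shift split_def del: prod.lessThan_Suc)
  also have "\<dots> = (\<Sum>x\<in>A. f 0 x) * (\<Sum>xs\<in>{xs. set xs \<subseteq> A \<and> length xs = n}. (\<Prod>k<n. f (Suc k) (xs!k)))"
    by (simp add: sum_product sum.cartesian_product' sum.swap[of _ A] mult.commute)
  also have "\<dots> = (\<Prod>k<Suc n. \<Sum>x\<in>A. f k x)"
    using Suc[of "\<lambda>i. f (Suc i)"] by (simp add: prod.lessThan_Suc_shift del: prod.lessThan_Suc)
  finally show ?case .
qed

lemma swp_length[simp]: "length (swp i xs) = length xs"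
  by (simp add: swp_def)

lemma swp_nth:
  assumes "1 \<le> i" "i < length xs" "j < length xs"
  shows "swp i xs ! j = (if j = i - 1 then xs ! i else if j = i then xs ! (i - 1) else xs ! j)"
  using assms by (auto simp: swp_def nth_list_update)

lemma swp_nth_transpose:
  assumes "1 \<le> i" "i < length xs" "j < length xs"
  shows "swp i xs ! j = xs ! (transpose (i - 1) i j)"
  using assms by (auto simp: swp_nth transpose_def)

lemma swp_swp:
  assumes "1 \<le> i" "i < length xs"
  shows "swp i (swp i xs) = xs"
  using assms by (intro nth_equalityI) (auto simp: swp_nth)

lemma swp_braid:
  assumes "1 \<le> k" "k + 1 < length xs"
  shows "swp k (swp (k+1) (swp k xs)) = swp (k+1) (swp k (swp (k+1) xs))"
  using assms by (intro nth_equalityI) (auto simp: swp_nth)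

lemma swp_comm:
  assumes "1 \<le> i" "i < length xs" "1 \<le> j" "j < length xs" "i + 2 \<le> j \<or> j + 2 \<le> i"
  shows "swp i (swp j xs) = swp j (swp i xs)"
  using assms by (intro nth_equalityI) (auto simp: swp_nth)

lemma prod_swp:
  assumes "1 \<le> i" "i < d" "length xs = d"
  shows "(\<Prod>k<d. f k (swp i xs ! k)) = (\<Prod>k<d. f (transpose (i - 1) i k) (xs ! k))"
proof -
  have p: "transpose (i - 1) i permutes {..<d}" using assms by (intro permutes_swap_id) auto
  have "(\<Prod>k<d. f k (swp i xs ! k)) = (\<Prod>k<d. f k (xs ! transpose (i - 1) i k))"
    using assms by (intro prod.cong) (auto simp: swp_nth_transpose)
  also have "\<dots> = (\<Prod>k<d. (\<lambda>k. f (transpose (i - 1) i k) (xs ! k)) (transpose (i - 1) i k))"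
    by simp
  also have "\<dots> = (\<Prod>k<d. f (transpose (i - 1) i k) (xs ! k))"
    using prod.permute[OF p, of "\<lambda>k. f (transpose (i - 1) i k) (xs ! k)"] by (simp add: comp_def)
  finally show ?thesis .
qed


lemma orbit_eq: "orbit d \<mu> = (\<lambda>g. map (\<lambda>k. \<mu> ! g k) [0..<d]) ` {g. g permutes {..<d}}"
    unfolding orbit_def by blast
lemma orbit_finite: "finite (orbit d \<mu>)"
  unfolding orbit_eq by (rule finite_imageI, rule finite_permutations) simp

lemma orbit_length: "\<rho> \<in> orbit d \<mu> \<Longrightarrow> length \<rho> = d"
  by (auto simp: orbit_def)

lemma orbit_obtain: assumes "\<rho> \<in> orbit d \<mu>"
  obtains g where "g permutes {..<d}" "\<rho> = map (\<lambda>k. \<mu> ! g k) [0..<d]"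
    using assms unfolding orbit_eq by blast

lemma orbit_distinct:
  fixes \<mu> :: "'a::linorder list"
  assumes "\<rho> \<in> orbit d \<mu>" "length \<mu> = d" "sorted_wrt (<) \<mu>"
  shows "distinct \<rho>"
proof -
  obtain g where g: "g permutes {..<d}" "\<rho> = map (\<lambda>k. \<mu> ! g k) [0..<d]"
    using assms(1) by (rule orbit_obtain)
  have dm: "distinct \<mu>" using assms(3) strict_sorted_iff by blast
  have ij: "inj_on g {..<d}" using g(1) permutes_inj_on by blast
  have gd: "\<And>k. k < d \<Longrightarrow> g k < d" using g(1) permutes_in_image by fastforce
  show ?thesis unfolding distinct_conv_nth
  proof (intro allI impI)
    fix i j assume "i < length \<rho>" "j < length \<rho>" "i \<noteq> j"
    then show "\<rho> ! i \<noteq> \<rho> ! j" using g(2) gd ij dm assms(2)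
      by (simp add: nth_eq_iff_index_eq inj_on_eq_iff)
  qed
qed

lemma orbit_swp:
  assumes "\<rho> \<in> orbit d \<mu>" "1 \<le> i" "i < d"
  shows "swp i \<rho> \<in> orbit d \<mu>"
proof -
  obtain g where g: "g permutes {..<d}" "\<rho> = map (\<lambda>k. \<mu> ! g k) [0..<d]"
    using assms(1) by (rule orbit_obtain)
  have p: "g \<circ> transpose (i - 1) i permutes {..<d}"
    using assms by (intro permutes_compose[OF _ g(1)] permutes_swap_id) auto
  have "swp i \<rho> = map (\<lambda>k. \<mu> ! (g \<circ> transpose (i - 1) i) k) [0..<d]"
  proof (rule nth_equalityI)
    fix k assume "k < length (swp i \<rho>)"
    then have k: "k < d" using g(2) by simp
    have "transpose (i - 1) i k < d" using k assms unfolding transpose_def by auto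
    then show "swp i \<rho> ! k = map (\<lambda>k. \<mu> ! (g \<circ> transpose (i - 1) i) k) [0..<d] ! k"
      using assms g(2) k by (simp add: swp_nth_transpose)
  qed (use g(2) in simp)
  then show ?thesis using p unfolding orbit_eq by blast
qed
lemma orbit_swp_not:
  assumes "\<rho> \<notin> orbit d \<mu>" "1 \<le> i" "i < d"
  shows "swp i \<rho> \<notin> orbit d \<mu>"
proof
  assume a: "swp i \<rho> \<in> orbit d \<mu>"
  then have "length \<rho> = d" using orbit_length by fastforce
  then show False using orbit_swp[OF a assms(2,3)] assms swp_swp by metis
qed

lemma orbit_swp_image:
  assumes "1 \<le> i" "i < d"
  shows "swp i ` orbit d \<mu> = orbit d \<mu>" "inj_on (swp i) (orbit d \<mu>)"
proof -
  show "swp i ` orbit d \<mu> = orbit d \<mu>"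
  proof
    show "swp i ` orbit d \<mu> \<subseteq> orbit d \<mu>" using orbit_swp assms by blast
    show "orbit d \<mu> \<subseteq> swp i ` orbit d \<mu>"
    proof
      fix x assume "x \<in> orbit d \<mu>"
      then show "x \<in> swp i ` orbit d \<mu>" using orbit_swp[of x] orbit_length[of x] assms swp_swp
        by (metis image_eqI)
    qed
  qed
  show "inj_on (swp i) (orbit d \<mu>)"
    by (rule inj_on_inverseI[where g="swp i"]) (use assms orbit_length swp_swp in metis)
qed

lemma tens_map2:
  assumes "length \<nu> = d" "length xs = d"
  shows "tens (map2 va \<nu> xs) \<rho> = (if length \<rho> = d then \<Prod>k<d. va (\<nu>!k) (xs!k) (\<rho>!k) else 0)"
  using assms by (simp add: tens_def)

lemma tens_map2_swp:
  assumes "length \<nu> = d" "length xs = d" "1 \<le> i" "i < d"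
  shows "tens (map2 va \<nu> xs) (swp i \<rho>) = tens (map2 va (swp i \<nu>) (swp i xs)) \<rho>"
proof (cases "length \<rho> = d")
  case True
  have "(\<Prod>k<d. va (\<nu>!k) (xs!k) (swp i \<rho>!k)) = (\<Prod>k<d. va (swp i \<nu>!k) (swp i xs!k) (\<rho>!k))"
    using assms True
    by (subst prod_swp[where f="\<lambda>k y. va (\<nu>!k) (xs!k) y"]) (auto intro!: prod.cong simp: swp_nth_transpose)
  then show ?thesis using assms True by (simp add: tens_map2)
qed (use assms in \<open>simp add: tens_map2\<close>)

lemma supp_sig:
  assumes "\<forall>x\<in>supp p. length x = d" "1 \<le> i" "i < d"
  shows "supp (sig i p) = swp i ` supp p" "inj_on (swp i) (supp p)"
proof -
  show "supp (sig i p) = swp i ` supp p"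
  proof
    show "supp (sig i p) \<subseteq> swp i ` supp p"
    proof
      fix x assume x: "x \<in> supp (sig i p)"
      then have s: "swp i x \<in> supp p" by (simp add: supp_def sig_def)
      then have "length x = d" using assms by fastforce
      then show "x \<in> swp i ` supp p" using s assms swp_swp by (metis image_eqI)
    qed
    show "swp i ` supp p \<subseteq> supp (sig i p)"
      using assms swp_swp by (fastforce simp: supp_def sig_def)
  qed
  show "inj_on (swp i) (supp p)"
    by (rule inj_on_inverseI[where g="swp i"]) (use assms swp_swp in metis)
qed

lemma tact_swp:
  assumes "\<forall>x\<in>supp w. length x = d" "\<forall>x\<in>supp b. length x = d" "1 \<le> i" "i < d"
  shows "tact va w b (swp i \<rho>) = tact va (sig i w) (sig i b) \<rho>"
proof -
  have "tact va (sig i w) (sig i b) \<rho> =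
     (\<Sum>a\<in>swp i ` supp w. \<Sum>c\<in>swp i ` supp b. w (swp i a) * b (swp i c) * tens (map2 va a c) \<rho>)"
    unfolding tact_def bilin_def supp_sig(1)[OF assms(1,3,4)] supp_sig(1)[OF assms(2,3,4)]
    by (simp add: sig_def)
  also have "\<dots> = (\<Sum>a\<in>supp w. \<Sum>c\<in>supp b. w (swp i (swp i a)) * b (swp i (swp i c)) * tens (map2 va (swp i a) (swp i c)) \<rho>)"
    using assms by (simp add: sum.reindex[OF supp_sig(2)[OF assms(1,3,4)]] sum.reindex[OF supp_sig(2)[OF assms(2,3,4)]])
  also have "\<dots> = tact va w b (swp i \<rho>)"
    using assms unfolding tact_def bilin_def
    by (intro sum.cong refl) (simp add: swp_swp tens_map2_swp)
  finally show ?thesis by simp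
qed



definition hA :: "'k::comm_ring_1 \<Rightarrow> 'k \<Rightarrow> nat \<Rightarrow> ('i::linorder list \<Rightarrow> 'k) \<Rightarrow> 'i list \<Rightarrow> 'k" where
  "hA s r i w = (\<lambda>\<rho>. if \<rho>!i < \<rho>!(i-1) then w (swp i \<rho>) + s * w \<rho> else r * w (swp i \<rho>))"

lemma hA_braid:
  fixes \<rho> :: "'i::linorder list"
  assumes "length \<rho> = d" "distinct \<rho>" "1 \<le> k" "k + 1 < d"
  shows "hA s r k (hA s r (k+1) (hA s r k w)) \<rho> = hA s r (k+1) (hA s r k (hA s r (k+1) w)) \<rho>"
proof -
  define x where "x = \<rho>!(k-1)"
  define y where "y = \<rho>!k"
  define z where "z = \<rho>!(k+1)"
  have n1: "x \<noteq> y" "x \<noteq> z" "y \<noteq> z"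
    using assms by (simp_all add: x_def y_def z_def nth_eq_iff_index_eq)
  have ord: "(x<y \<and> y<z \<and> x<z) \<or> (x<z \<and> z<y \<and> x<y) \<or> (y<x \<and> x<z \<and> y<z) \<or>
     (y<z \<and> z<x \<and> y<x) \<or> (z<x \<and> x<y \<and> z<y) \<or> (z<y \<and> y<x \<and> z<x)"
    using n1 by (metis linorder_neqE less_trans)
  have kk: "k + 1 - 1 = k" by simp
  obtain A where A: "swp k \<rho> = A" by simp
  obtain B where B: "swp (k+1) \<rho> = B" by simp
  obtain AB where AB: "swp k B = AB" by simp
  obtain BA where BA: "swp (k+1) A = BA" by simp
  obtain C where C: "swp k BA = C" by simp
  have C2: "swp (k+1) AB = C"
    using swp_braid[of k \<rho>] assms A B AB BA C by simp
  have L: "length A = d" "length B = d" "length AB = d" "length BA = d" "length C = d"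
    using assms A B AB BA C by (auto)
  have ii: "swp k A = \<rho>" "swp (k+1) B = \<rho>" "swp k AB = B" "swp (k+1) BA = A"
     "swp k C = BA" "swp (k+1) C = AB"
    using swp_swp[of k \<rho>] swp_swp[of "k+1" \<rho>] swp_swp[of k B] swp_swp[of "k+1" A]
      swp_swp[of k BA] swp_swp[of "k+1" AB] assms A B AB BA C C2 L by simp_all
  have V: "\<rho>!(k-1) = x" "\<rho>!k = y" "\<rho>!(k+1) = z"
    "A!(k-1) = y" "A!k = x" "A!(k+1) = z"
    "B!(k-1) = x" "B!k = z" "B!(k+1) = y"
    "AB!(k-1) = z" "AB!k = x" "AB!(k+1) = y"
    "BA!(k-1) = y" "BA!k = z" "BA!(k+1) = x"
    "C!(k-1) = z" "C!k = y" "C!(k+1) = x"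
    using assms A B AB BA C by (auto simp add: x_def y_def z_def swp_nth)
  have "hA s r k (hA s r (k+1) (hA s r k w)) \<rho> - hA s r (k+1) (hA s r k (hA s r (k+1) w)) \<rho> = 0"
    unfolding hA_def kk
    apply (simp only: A B AB BA C C2 ii V)
    using ord by (elim disjE conjE; simp add: algebra_simps less_not_sym)
  then show ?thesis by simp
qed


lemma hA_comm:
  fixes \<rho> :: "'i::linorder list"
  assumes "length \<rho> = d" "distinct \<rho>" "1 \<le> i" "i + 2 \<le> j" "j < d"
  shows "hA s r i (hA s r j w) \<rho> = hA s r j (hA s r i w) \<rho>"
proof -
  define a where "a = \<rho>!(i-1)"
  define b where "b = \<rho>!i"
  define c where "c = \<rho>!(j-1)"
  define e where "e = \<rho>!j"
  have n1: "a \<noteq> b" "c \<noteq> e"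
    using assms by (simp_all add: a_def b_def c_def e_def nth_eq_iff_index_eq)
  have ord: "(a < b \<or> b < a) \<and> (c < e \<or> e < c)" using n1 by auto
  obtain A where A: "swp i \<rho> = A" by simp
  obtain B where B: "swp j \<rho> = B" by simp
  obtain C where C: "swp i B = C" by simp
  have C2: "swp j A = C"
    using swp_comm[of i \<rho> j] assms A B C by simp
  have L: "length A = d" "length B = d" "length C = d"
    using assms A B C by (auto)
  have ii: "swp i A = \<rho>" "swp j B = \<rho>" "swp i C = B" "swp j C = A"
    using swp_swp[of i \<rho>] swp_swp[of j \<rho>] swp_swp[of i B] swp_swp[of j A]
      assms A B C C2 L by simp_all
  have V: "\<rho>!(i-1) = a" "\<rho>!i = b" "\<rho>!(j-1) = c" "\<rho>!j = e"
    "A!(i-1) = b" "A!i = a" "A!(j-1) = c" "A!j = e"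
    "B!(i-1) = a" "B!i = b" "B!(j-1) = e" "B!j = c"
    "C!(i-1) = b" "C!i = a" "C!(j-1) = e" "C!j = c"
    using assms A B C by (auto simp add: a_def b_def c_def e_def swp_nth)
  have "hA s r i (hA s r j w) \<rho> - hA s r j (hA s r i w) \<rho> = 0"
    unfolding hA_def
    apply (simp only: A B C C2 ii V)
    using ord by (elim disjE conjE; simp add: algebra_simps less_not_sym)
  then show ?thesis by simp
qed

lemma hA_quad:
  fixes \<rho> :: "'i::linorder list"
  assumes "length \<rho> = d" "distinct \<rho>" "1 \<le> i" "i < d"
  shows "hA s r i (hA s r i w) \<rho> = s * hA s r i w \<rho> + r * w \<rho>"
proof -
  define a where "a = \<rho>!(i-1)"
  define b where "b = \<rho>!i"
  have n1: "a \<noteq> b"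
    using assms by (simp_all add: a_def b_def nth_eq_iff_index_eq)
  have ord: "a < b \<or> b < a" using n1 by auto
  obtain A where A: "swp i \<rho> = A" by simp
  have ii: "swp i A = \<rho>"
    using swp_swp[of i \<rho>] assms A by simp_all
  have V: "\<rho>!(i-1) = a" "\<rho>!i = b" "A!(i-1) = b" "A!i = a"
    using assms A by (auto simp add: a_def b_def swp_nth)
  show ?thesis
    unfolding hA_def
    apply (simp only: A ii V)
    using ord by (elim disjE conjE; simp add: algebra_simps less_not_sym)
qed



definition EpsK :: "('x \<Rightarrow> 'k::comm_ring_1) \<Rightarrow> nat \<Rightarrow> ('x list \<Rightarrow> 'k) \<Rightarrow> 'k" where
  "EpsK \<epsilon> d b = (\<Sum>xs\<in>supp b. b xs * (\<Prod>k<d. \<epsilon> (xs!k)))"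

lemma delta_apply: "delta a b = (if b = a then 1 else 0)"
  by (simp add: delta_def)

lemma prod_delta:
  assumes "length \<nu> = d" "length \<rho> = d"
  shows "(\<Prod>k<d. delta (\<nu>!k) (\<rho>!k) :: 'k::comm_ring_1) = delta \<nu> \<rho>"
proof (cases "\<nu> = \<rho>")
  case True then show ?thesis by (simp add: delta_apply)
next
  case False
  then obtain k where k: "k < d" "\<nu>!k \<noteq> \<rho>!k" using assms nth_equalityI by metis
  then have "(\<Prod>k<d. delta (\<nu>!k) (\<rho>!k) :: 'k) = 0"
    by (intro prod_zero) (use k in \<open>auto simp: delta_apply intro!: bexI[where x=k]\<close>)
  then show ?thesis using False by (simp add: delta_apply)
qed

lemma tens_eps:
  assumes va: "\<forall>i x. va i x = (\<lambda>j. \<epsilon> x * delta i j)"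
    and "length \<nu> = d" "length xs = d"
  shows "tens (map2 va \<nu> xs) \<rho> = (\<Prod>k<d. \<epsilon> (xs!k)) * delta \<nu> \<rho>"
proof (cases "length \<rho> = d")
  case True
  have "(\<Prod>k<d. va (\<nu>!k) (xs!k) (\<rho>!k)) = (\<Prod>k<d. \<epsilon> (xs!k) * delta (\<nu>!k) (\<rho>!k))"
    using va by simp
  also have "\<dots> = (\<Prod>k<d. \<epsilon> (xs!k)) * delta \<nu> \<rho>"
    using assms True by (simp add: prod.distrib prod_delta)
  finally show ?thesis using assms True by (simp add: tens_map2)
next
  case False
  then have "\<rho> \<noteq> \<nu>" using assms by auto
  then show ?thesis using assms False by (simp add: tens_map2 delta_apply)
qed

lemma tact_eps:
  assumes va: "\<forall>i x. va i x = (\<lambda>j. \<epsilon> x * delta i j)"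
    and fw: "finite (supp w)" and lw: "\<forall>x\<in>supp w. length x = d" and lb: "\<forall>x\<in>supp b. length x = d"
  shows "tact va w b = (\<lambda>\<rho>. EpsK \<epsilon> d b * w \<rho>)"
proof
  fix \<rho>
  have "tact va w b \<rho> = (\<Sum>\<nu>\<in>supp w. \<Sum>xs\<in>supp b. w \<nu> * b xs * ((\<Prod>k<d. \<epsilon> (xs!k)) * delta \<nu> \<rho>))"
    unfolding tact_def bilin_def using lw lb
    by (intro sum.cong refl) (simp add: tens_eps[OF va])
  also have "\<dots> = (\<Sum>\<nu>\<in>supp w. (w \<nu> * delta \<nu> \<rho>) * EpsK \<epsilon> d b)"
    unfolding EpsK_def by (simp add: sum_distrib_left sum_distrib_right mult_ac)
  also have "\<dots> = (\<Sum>\<nu>\<in>supp w. if \<nu> = \<rho> then w \<rho> * EpsK \<epsilon> d b else 0)"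
    by (intro sum.cong refl) (auto simp: delta_apply)
  also have "\<dots> = EpsK \<epsilon> d b * w \<rho>"
    using fw by (simp add: sum.delta' supp_def mult.commute)
  finally show "tact va w b \<rho> = EpsK \<epsilon> d b * w \<rho>" .
qed

lemma supp_len_sig:
  assumes "\<forall>x\<in>supp b. length x = d"
  shows "\<forall>x\<in>supp (sig i b). length x = d"
  using assms by (auto simp: supp_def sig_def)

lemma Eps_sig:
  assumes "\<forall>x\<in>supp b. length x = d" "1 \<le> i" "i < d"
  shows "EpsK \<epsilon> d (sig i b) = EpsK \<epsilon> d b"
proof -
  have "EpsK \<epsilon> d (sig i b) = (\<Sum>xs\<in>swp i ` supp b. b (swp i xs) * (\<Prod>k<d. \<epsilon> (xs!k)))"
    unfolding EpsK_def supp_sig(1)[OF assms] by (simp add: sig_def)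
  also have "\<dots> = (\<Sum>xs\<in>supp b. b (swp i (swp i xs)) * (\<Prod>k<d. \<epsilon> (swp i xs!k)))"
    by (simp add: sum.reindex[OF supp_sig(2)[OF assms]])
  also have "\<dots> = EpsK \<epsilon> d b"
    unfolding EpsK_def using assms
    by (intro sum.cong refl) (simp add: swp_swp prod_swp[where f="\<lambda>k y. \<epsilon> y"])
  finally show ?thesis .
qed

lemma Eps_superset:
  assumes "finite F" "supp b \<subseteq> F"
  shows "EpsK \<epsilon> d b = (\<Sum>xs\<in>F. b xs * (\<Prod>k<d. \<epsilon> (xs!k)))"
  unfolding EpsK_def using assms
  by (intro sum.mono_neutral_left) (auto simp: supp_def)

lemma Eps_add:
  assumes "finite (supp b)" "finite (supp c)"
  shows "EpsK \<epsilon> d (\<lambda>xs. b xs + c xs) = EpsK \<epsilon> d b + EpsK \<epsilon> d c"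
proof -
  have s: "supp (\<lambda>xs. b xs + c xs) \<subseteq> supp b \<union> supp c" by (auto simp: supp_def)
  show ?thesis
    using assms s
    by (simp add: Eps_superset[of "supp b \<union> supp c"] distrib_right sum.distrib)
qed

lemma Eps_scale:
  assumes "finite (supp b)"
  shows "EpsK \<epsilon> d (\<lambda>xs. c * b xs) = c * EpsK \<epsilon> d b"
proof -
  have s: "supp (\<lambda>xs. c * b xs) \<subseteq> supp b" by (auto simp: supp_def)
  show ?thesis
    using assms s
    by (simp add: Eps_superset[of "supp b"] sum_distrib_left mult_ac)
qed

lemma emb_len: "\<forall>x\<in>supp (emb u d i Z). length x = d"
  by (auto simp: supp_def emb_def)

lemma emb_shift:
  assumes "1 \<le> k" "k + 1 < d"
  shows "emb u d (k+1) Z = sig k (sig (k+1) (emb u d k Z))"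
proof
  fix xs
  show "emb u d (k+1) Z xs = sig k (sig (k+1) (emb u d k Z)) xs"
  proof (cases "length xs = d")
    case False then show ?thesis by (simp add: emb_def sig_def)
  next
    case True
    define ys where "ys = swp (k+1) (swp k xs)"
    have ly: "length ys = d" using True by (simp add: ys_def)
    have yv: "ys!(k-1) = xs!k" "ys!k = xs!(k+1)" "ys!(k+1) = xs!(k-1)"
      "\<And>j. j < d \<Longrightarrow> j \<noteq> k-1 \<Longrightarrow> j \<noteq> k \<Longrightarrow> j \<noteq> k+1 \<Longrightarrow> ys!j = xs!j"
      using assms True by (auto simp: ys_def swp_nth)
    have fin: "finite ({..<d} - {k-1,k})" "finite ({..<d} - {k,k+1})" by auto
    have e1: "{..<d} - {k-1,k} - {k+1} = {..<d} - {k-1,k,k+1}" by auto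
    have e2: "{..<d} - {k,k+1} - {k-1} = {..<d} - {k-1,k,k+1}" by auto
    have "(\<Prod>j\<in>{..<d} - {k-1,k}. u (ys!j)) = u (ys!(k+1)) * (\<Prod>j\<in>{..<d} - {k-1,k,k+1}. u (ys!j))"
      apply (subst prod.remove[OF fin(1), of "k+1"])
      using assms apply auto[1]
      apply (simp only: e1)
      done
    also have "\<dots> = u (xs!(k-1)) * (\<Prod>j\<in>{..<d} - {k-1,k,k+1}. u (xs!j))"
      using yv by (auto intro!: prod.cong)
    also have "\<dots> = (\<Prod>j\<in>{..<d} - {k,k+1}. u (xs!j))"
      apply (subst prod.remove[OF fin(2), of "k-1"])
      using assms apply auto[1]
      apply (simp only: e2)
      done
    finally have P: "(\<Prod>j\<in>{..<d} - {k-1,k}. u (ys!j)) = (\<Prod>j\<in>{..<d} - {k,k+1}. u (xs!j))" .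
    show ?thesis using True ly P yv(1,2)
      unfolding emb_def sig_def ys_def[symmetric] by simp
  qed
qed

lemma Eps_emb_const:
  assumes "1 \<le> i" "i < d"
  shows "EpsK \<epsilon> d (emb u d i Z) = EpsK \<epsilon> d (emb u d 1 Z)"
  using assms
proof (induction i)
  case 0 then show ?case by simp
next
  case (Suc i)
  show ?case
  proof (cases "i = 0")
    case True then show ?thesis by simp
  next
    case False
    then have i: "1 \<le> i" "i + 1 < d" using Suc by auto
    have "EpsK \<epsilon> d (emb u d (i+1) Z) = EpsK \<epsilon> d (sig i (sig (i+1) (emb u d i Z)))"
      by (subst emb_shift[OF i]) (rule refl)
    also have "\<dots> = EpsK \<epsilon> d (sig (i+1) (emb u d i Z))"
      using i by (intro Eps_sig supp_len_sig emb_len) auto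
    also have "\<dots> = EpsK \<epsilon> d (emb u d i Z)"
      using i by (intro Eps_sig emb_len) auto
    finally show ?thesis using Suc i by simp
  qed
qed



lemma tpow_len: "p \<in> tpow d \<Longrightarrow> \<forall>x\<in>supp p. length x = d"
  by (auto simp: tpow_def supp_def)
lemma tpow_fin: "p \<in> tpow d \<Longrightarrow> finite (supp p)"
  by (auto simp: tpow_def fsupp_def)
lemma tpow_add: fixes p q :: "'x list \<Rightarrow> 'k::comm_ring_1" shows "p \<in> tpow d \<Longrightarrow> q \<in> tpow d \<Longrightarrow> (\<lambda>xs. p xs + q xs) \<in> tpow d"
proof -
  assume a: "p \<in> tpow d" "q \<in> tpow d"
  have "supp (\<lambda>xs. p xs + q xs) \<subseteq> supp p \<union> supp q" by (auto simp: supp_def)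
  then show ?thesis using a by (auto simp: tpow_def fsupp_def intro: finite_subset) (metis add_0)
qed
lemma tpow_scale: fixes p :: "'x list \<Rightarrow> 'k::comm_ring_1" shows "p \<in> tpow d \<Longrightarrow> (\<lambda>xs. c * p xs) \<in> tpow d"
proof -
  assume a: "p \<in> tpow d"
  have "supp (\<lambda>xs. c * p xs) \<subseteq> supp p" by (auto simp: supp_def)
  then show ?thesis using a by (auto simp: tpow_def fsupp_def intro: finite_subset) (metis mult_zero_right)
qed

lemma supp_delta: "supp (delta \<nu>) \<subseteq> {\<nu>}"
  by (auto simp: supp_def delta_apply)

lemma Wsum_eps:
  assumes va: "\<forall>i x. va i x = (\<lambda>j. \<epsilon> x * delta i j)" and p: "\<forall>\<nu>. p \<nu> \<in> tpow d"
  shows "(\<lambda>\<rho>. \<Sum>\<nu>\<in>orbit d \<mu>. tact va (delta \<nu>) (p \<nu>) \<rho>) =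
         (\<lambda>\<rho>. if \<rho> \<in> orbit d \<mu> then EpsK \<epsilon> d (p \<rho>) else 0)"
proof
  fix \<rho>
  have "(\<Sum>\<nu>\<in>orbit d \<mu>. tact va (delta \<nu>) (p \<nu>) \<rho>) = (\<Sum>\<nu>\<in>orbit d \<mu>. if \<nu> = \<rho> then EpsK \<epsilon> d (p \<rho>) else 0)"
  proof (intro sum.cong refl)
    fix \<nu> assume n: "\<nu> \<in> orbit d \<mu>"
    have "tact va (delta \<nu>) (p \<nu>) = (\<lambda>\<rho>. EpsK \<epsilon> d (p \<nu>) * delta \<nu> \<rho>)"
    proof (rule tact_eps[OF va])
      show "finite (supp (delta \<nu>))" using supp_delta finite_subset by fastforce
      show "\<forall>x\<in>supp (delta \<nu>). length x = d" using supp_delta orbit_length[OF n] by fastforce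
      show "\<forall>x\<in>supp (p \<nu>). length x = d" using p tpow_len by blast
    qed
    then show "tact va (delta \<nu>) (p \<nu>) \<rho> = (if \<nu> = \<rho> then EpsK \<epsilon> d (p \<rho>) else 0)"
      by (auto simp: delta_apply)
  qed
  also have "\<dots> = (if \<rho> \<in> orbit d \<mu> then EpsK \<epsilon> d (p \<rho>) else 0)"
    by (simp add: sum.delta[OF orbit_finite])
  finally show "(\<Sum>\<nu>\<in>orbit d \<mu>. tact va (delta \<nu>) (p \<nu>) \<rho>) = (if \<rho> \<in> orbit d \<mu> then EpsK \<epsilon> d (p \<rho>) else 0)" .
qed

lemma Wsub_eps_eq:
  assumes va: "\<forall>i x. va i x = (\<lambda>j. \<epsilon> x * delta i j)"
  shows "Wsub va d \<mu> = {(\<lambda>\<rho>. if \<rho> \<in> orbit d \<mu> then EpsK \<epsilon> d (p \<rho>) else 0) | p. \<forall>\<nu>. p \<nu> \<in> tpow d}"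
proof (intro set_eqI iffI)
  fix w assume "w \<in> Wsub va d \<mu>"
  then obtain p where p: "\<forall>\<nu>. p \<nu> \<in> tpow d" "w = (\<lambda>\<rho>. \<Sum>\<nu>\<in>orbit d \<mu>. tact va (delta \<nu>) (p \<nu>) \<rho>)"
    unfolding Wsub_def by blast
  then show "w \<in> {(\<lambda>\<rho>. if \<rho> \<in> orbit d \<mu> then EpsK \<epsilon> d (p \<rho>) else 0) | p. \<forall>\<nu>. p \<nu> \<in> tpow d}"
    using Wsum_eps[OF va p(1)] by auto
next
  fix w assume "w \<in> {(\<lambda>\<rho>. if \<rho> \<in> orbit d \<mu> then EpsK \<epsilon> d (p \<rho>) else 0) | p. \<forall>\<nu>. p \<nu> \<in> tpow d}"
  then obtain p where p: "\<forall>\<nu>. p \<nu> \<in> tpow d" "w = (\<lambda>\<rho>. if \<rho> \<in> orbit d \<mu> then EpsK \<epsilon> d (p \<rho>) else 0)"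
    by blast
  have "w = (\<lambda>\<rho>. \<Sum>\<nu>\<in>orbit d \<mu>. tact va (delta \<nu>) (p \<nu>) \<rho>)"
    using Wsum_eps[OF va p(1)] p(2) by simp
  then show "w \<in> Wsub va d \<mu>"
    unfolding Wsub_def using p(1) by blast
qed

lemma hA_add: "hA s r i (\<lambda>\<nu>. w \<nu> + w' \<nu>) = (\<lambda>\<nu>. hA s r i w \<nu> + hA s r i w' \<nu>)"
  by (auto simp: hA_def algebra_simps)
lemma hA_scale: "hA s r i (\<lambda>\<nu>. c * w \<nu>) = (\<lambda>\<nu>. c * hA s r i w \<nu>)"
  by (auto simp: hA_def algebra_simps)

lemma part_a:
  fixes \<mu> :: "'i::linorder list" and va :: "'i \<Rightarrow> 'x \<Rightarrow> 'i \<Rightarrow> 'k::comm_ring_1"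
  assumes va: "\<forall>i x. va i x = (\<lambda>j. \<epsilon> x * delta i j)"
    and d: "2 \<le> d" and lm: "length \<mu> = d" and sm: "sorted_wrt (<) \<mu>"
  shows "extends_to_qwp_module u va d \<mu> S R"
proof -
  define Orb where "Orb = orbit d \<mu>"
  define s where "s = EpsK \<epsilon> d (emb u d 1 S)"
  define r where "r = EpsK \<epsilon> d (emb u d 1 R)"
  define WW where "WW = Wsub va d \<mu>"
  have WWc: "WW = {(\<lambda>\<rho>. if \<rho> \<in> Orb then EpsK \<epsilon> d (p \<rho>) else 0) | p. \<forall>\<nu>. p \<nu> \<in> tpow d}"
    unfolding WW_def Orb_def by (rule Wsub_eps_eq[OF va])
  have W1: "w \<rho> = 0" if "w \<in> WW" "\<rho> \<notin> Orb" for w \<rho>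
    using that unfolding WWc by auto
  have W2: "finite (supp w)" "\<forall>x\<in>supp w. length x = d" if "w \<in> WW" for w
  proof -
    have "supp w \<subseteq> Orb" using W1[OF that] by (auto simp: supp_def)
    then show "finite (supp w)" "\<forall>x\<in>supp w. length x = d"
      unfolding Orb_def using orbit_length[of _ d \<mu>] by (auto intro: finite_subset[OF _ orbit_finite])
  qed
  have Es: "EpsK \<epsilon> d (emb u d i S) = s" "EpsK \<epsilon> d (emb u d i R) = r" if "1 \<le> i" "i < d" for i
    unfolding s_def r_def by (rule Eps_emb_const[OF that])+
  have ts: "tact va w b = (\<lambda>\<rho>. EpsK \<epsilon> d b * w \<rho>)" if "w \<in> WW" "\<forall>x\<in>supp b. length x = d" for w b
    using tact_eps[OF va W2[OF that(1)] that(2)] .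
  have W3: "hA s r i w \<in> WW" if w: "w \<in> WW" and i: "1 \<le> i" "i < d" for w i
  proof -
    obtain p where p: "\<forall>\<nu>. p \<nu> \<in> tpow d" and wp: "w = (\<lambda>\<rho>. if \<rho> \<in> Orb then EpsK \<epsilon> d (p \<rho>) else 0)"
      using w unfolding WWc by auto
    define p' where "p' = (\<lambda>\<rho>. if \<rho>!i < \<rho>!(i-1) then (\<lambda>xs. p (swp i \<rho>) xs + s * p \<rho> xs)
                                 else (\<lambda>xs. r * p (swp i \<rho>) xs))"
    have fp: "\<And>x. finite (supp (p x))" using p tpow_fin by blast
    have fs: "\<And>x c. finite (supp (\<lambda>xs. c * p x xs))" using p tpow_fin tpow_scale by blast
    have p': "\<forall>\<nu>. p' \<nu> \<in> tpow d" using p by (auto simp: p'_def intro!: tpow_add tpow_scale)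
    have "hA s r i w = (\<lambda>\<rho>. if \<rho> \<in> Orb then EpsK \<epsilon> d (p' \<rho>) else 0)"
    proof
      fix \<rho>
      show "hA s r i w \<rho> = (if \<rho> \<in> Orb then EpsK \<epsilon> d (p' \<rho>) else 0)"
      proof (cases "\<rho> \<in> Orb")
        case True
        then have "swp i \<rho> \<in> Orb" using orbit_swp i unfolding Orb_def by blast
        then show ?thesis using True p
          by (auto simp: hA_def wp p'_def Eps_add[OF fp fs] Eps_scale[OF fp])
      next
        case False
        then have "swp i \<rho> \<notin> Orb" using orbit_swp_not i unfolding Orb_def by blast
        then show ?thesis using False by (simp add: hA_def wp)
      qed
    qed
    then show ?thesis unfolding WWc using p' by blast
  qed
  have OD: "length \<rho> = d" "distinct \<rho>" if "\<rho> \<in> Orb" for \<rho>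
    using that orbit_length orbit_distinct[OF _ lm sm] unfolding Orb_def by auto
  have mod: "qwp_module_on u va d S R WW (hA s r)"
    unfolding qwp_module_on_def
  proof (intro conjI ballI allI impI)
    fix i w assume i: "i \<in> {1..<d}" and w: "w \<in> WW"
    then show "hA s r i w \<in> WW" using W3 by auto
  next
    fix i w w' show "hA s r i (\<lambda>\<nu>. w \<nu> + w' \<nu>) = (\<lambda>\<nu>. hA s r i w \<nu> + hA s r i w' \<nu>)"
      by (rule hA_add)
  next
    fix i w c show "hA s r i (\<lambda>\<nu>. c * w \<nu>) = (\<lambda>\<nu>. c * hA s r i w \<nu>)"
      by (rule hA_scale)
  next
    fix i w and b :: "'x list \<Rightarrow> 'k" assume i: "i \<in> {1..<d}" and w: "w \<in> WW" and b: "b \<in> tpow d"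
    have hw: "hA s r i w \<in> WW" using W3 i w by auto
    have lb: "\<forall>x\<in>supp b. length x = d" using b tpow_len by blast
    show "tact va (hA s r i w) b = hA s r i (tact va w (sig i b))"
      using i by (simp add: ts[OF hw lb] ts[OF w supp_len_sig[OF lb]] hA_scale Eps_sig[OF lb])
  next
    fix i w assume i: "i \<in> {1..<d}" and w: "w \<in> WW"
    have hw: "hA s r i w \<in> WW" using W3 i w by auto
    have hhw: "hA s r i (hA s r i w) \<in> WW" using W3 i hw by auto
    show "hA s r i (hA s r i w) =
        (\<lambda>\<nu>. hA s r i (tact va w (emb u d i S)) \<nu> + tact va w (emb u d i R) \<nu>)"
    proof
      fix \<rho>
      have "(\<lambda>\<nu>. hA s r i (tact va w (emb u d i S)) \<nu> + tact va w (emb u d i R) \<nu>) \<rho>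
          = s * hA s r i w \<rho> + r * w \<rho>"
        using i by (simp add: ts[OF w emb_len] Es hA_scale)
      moreover have "hA s r i (hA s r i w) \<rho> = s * hA s r i w \<rho> + r * w \<rho>"
      proof (cases "\<rho> \<in> Orb")
        case True then show ?thesis using i OD by (intro hA_quad) auto
      next
        case False then show ?thesis using W1[OF hhw False] W1[OF hw False] W1[OF w False] by simp
      qed
      ultimately show "hA s r i (hA s r i w) \<rho> =
        (\<lambda>\<nu>. hA s r i (tact va w (emb u d i S)) \<nu> + tact va w (emb u d i R) \<nu>) \<rho>" by simp
    qed
  next
    fix k w assume k: "1 \<le> k \<and> k + 1 < d" and w: "w \<in> WW"
    have c1: "hA s r k (hA s r (k+1) (hA s r k w)) \<in> WW" using W3 k w by auto
    have c2: "hA s r (k+1) (hA s r k (hA s r (k+1) w)) \<in> WW" using W3 k w by auto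
    show "hA s r k (hA s r (k + 1) (hA s r k w)) = hA s r (k + 1) (hA s r k (hA s r (k + 1) w))"
    proof
      fix \<rho> show "hA s r k (hA s r (k + 1) (hA s r k w)) \<rho> = hA s r (k + 1) (hA s r k (hA s r (k + 1) w)) \<rho>"
      proof (cases "\<rho> \<in> Orb")
        case True then show ?thesis using k OD by (intro hA_braid) auto
      next
        case False then show ?thesis using W1[OF c1 False] W1[OF c2 False] by simp
      qed
    qed
  next
    fix i j w assume i: "i \<in> {1..<d}" and j: "j \<in> {1..<d}" and ij: "i + 2 \<le> j \<or> j + 2 \<le> i"
      and w: "w \<in> WW"
    have c1: "hA s r i (hA s r j w) \<in> WW" using W3 i j w by auto
    have c2: "hA s r j (hA s r i w) \<in> WW" using W3 i j w by auto
    show "hA s r i (hA s r j w) = hA s r j (hA s r i w)"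
    proof
      fix \<rho> show "hA s r i (hA s r j w) \<rho> = hA s r j (hA s r i w) \<rho>"
      proof (cases "\<rho> \<in> Orb")
        case True
        show ?thesis using ij
        proof
          assume "i + 2 \<le> j" then show ?thesis using True i j OD by (intro hA_comm) auto
        next
          assume "j + 2 \<le> i" then show ?thesis using True i j OD by (intro hA_comm[symmetric]) auto
        qed
      next
        case False then show ?thesis using W1[OF c1 False] W1[OF c2 False] by simp
      qed
    qed
  qed
  have rule: "qwp_rule u va d \<mu> S R (hA s r)"
    unfolding qwp_rule_def
  proof (intro ballI conjI impI)
    fix i \<nu> assume i: "i \<in> {1..<d}" and n: "\<nu> \<in> orbit d \<mu>"
    have nO: "\<nu> \<in> Orb" using n Orb_def by simp
    have ln: "length \<nu> = d" using OD nO by auto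
    have dn: "\<nu>!(i-1) \<noteq> \<nu>!i" using OD[OF nO] i by (subst nth_eq_iff_index_eq) auto
    have sv: "swp i \<nu> ! (i-1) = \<nu>!i" "swp i \<nu> ! i = \<nu>!(i-1)" using i ln by (auto simp: swp_nth)
    have ne: "swp i \<nu> \<noteq> \<nu>" using sv dn by auto
    have eqi: "(swp i \<rho> = \<nu>) = (\<rho> = swp i \<nu>)" for \<rho>
      using i ln swp_swp by (metis atLeastLessThan_iff swp_length)
    {
      assume lt: "\<nu>!(i-1) < \<nu>!i"
      show "hA s r i (delta \<nu>) = delta (swp i \<nu>)"
      proof
        fix \<rho> show "hA s r i (delta \<nu>) \<rho> = delta (swp i \<nu>) \<rho>"
          using lt sv ne unfolding hA_def delta_apply eqi by auto
      qed
    }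
    {
      assume lt: "\<nu>!i < \<nu>!(i-1)"
      have l1: "\<forall>x\<in>supp (delta \<nu>). length x = d" "\<forall>x\<in>supp (delta (swp i \<nu>)). length x = d"
        using supp_delta ln by fastforce+
      have f1: "finite (supp (delta \<nu>))" "finite (supp (delta (swp i \<nu>)))"
        using supp_delta finite_subset by fastforce+
      show "hA s r i (delta \<nu>) =
           (\<lambda>\<rho>. tact va (delta (swp i \<nu>)) (emb u d i R) \<rho> + tact va (delta \<nu>) (emb u d i S) \<rho>)"
      proof
        fix \<rho>
        have "(\<lambda>\<rho>. tact va (delta (swp i \<nu>)) (emb u d i R) \<rho> + tact va (delta \<nu>) (emb u d i S) \<rho>) \<rho>
            = r * delta (swp i \<nu>) \<rho> + s * delta \<nu> \<rho>"
          using i by (simp add: tact_eps[OF va f1(2) l1(2) emb_len] tact_eps[OF va f1(1) l1(1) emb_len] Es)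
        moreover have "hA s r i (delta \<nu>) \<rho> = r * delta (swp i \<nu>) \<rho> + s * delta \<nu> \<rho>"
          using lt sv ne unfolding hA_def delta_apply eqi by auto
        ultimately show "hA s r i (delta \<nu>) \<rho> =
           (\<lambda>\<rho>. tact va (delta (swp i \<nu>)) (emb u d i R) \<rho> + tact va (delta \<nu>) (emb u d i S) \<rho>) \<rho>"
          by simp
      qed
    }
  qed
  show ?thesis unfolding extends_to_qwp_module_def using mod rule WW_def by blast
qed



lemma supp_delta': "supp (delta \<nu>) \<subseteq> {\<nu>}"
  by (auto simp: supp_def delta_apply)

lemma tpow_len': "p \<in> tpow d \<Longrightarrow> \<forall>x\<in>supp p. length x = d"
  by (auto simp: tpow_def supp_def)
lemma tpow_fin': "p \<in> tpow d \<Longrightarrow> finite (supp p)"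
  by (auto simp: tpow_def fsupp_def)

lemma swp_eq_iff:
  assumes "length \<nu> = d" "1 \<le> i" "i < d"
  shows "(swp i \<rho> = \<nu>) = (\<rho> = swp i \<nu>)"
  using assms swp_swp by (metis swp_length)

lemma sig_delta:
  assumes "length \<nu> = d" "1 \<le> i" "i < d"
  shows "sig i (delta \<nu>) = delta (swp i \<nu>)"
  by (rule ext) (simp add: sig_def delta_apply swp_eq_iff[OF assms])

lemma sig_sig:
  assumes "\<forall>x\<in>supp b. length x = d" "1 \<le> i" "i < d"
  shows "sig i (sig i b) = b"
proof
  fix xs show "sig i (sig i b) xs = b xs"
  proof (cases "length xs = d")
    case True then show ?thesis using assms by (simp add: sig_def swp_swp)
  next
    case False
    then have "swp i (swp i xs) \<notin> supp b" "xs \<notin> supp b" using assms by auto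
    then show ?thesis by (simp add: sig_def supp_def)
  qed
qed

lemma sig_tpow:
  assumes "b \<in> tpow d" "1 \<le> i" "i < d"
  shows "sig i b \<in> tpow d"
proof -
  have l: "\<forall>x\<in>supp b. length x = d" using assms tpow_len' by blast
  have "finite (supp (sig i b))" using supp_sig(1)[OF l assms(2,3)] tpow_fin'[OF assms(1)] by simp
  moreover have "\<forall>x\<in>supp (sig i b). length x = d" using supp_len_sig[OF l] .
  ultimately show ?thesis by (auto simp: tpow_def fsupp_def supp_def)
qed

lemma tone_eq: "tone u d xs = (if length xs = d then (\<Prod>k<d. u (xs!k)) else 0)"
  by (simp add: tone_def tens_def)

lemma emb_tone2:
  assumes "1 \<le> i" "i < d"
  shows "emb u d i (tone u 2) = tone u d"
proof
  fix xs
  show "emb u d i (tone u 2) xs = tone u d xs"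
  proof (cases "length xs = d")
    case False then show ?thesis by (simp add: emb_def tone_eq)
  next
    case True
    have t2: "tone u 2 [a, b] = u a * u b" for a b
      by (simp add: tone_eq numeral_2_eq_2)
    have fin: "finite {..<d}" "finite ({..<d} - {i})" by auto
    have e: "{..<d} - {i} - {i - 1} = {..<d} - {i - 1, i}" by auto
    have "(\<Prod>k<d. u (xs!k)) = u (xs!i) * (\<Prod>k\<in>{..<d} - {i}. u (xs!k))"
      using assms by (subst prod.remove[OF fin(1), of i]) auto
    also have "\<dots> = u (xs!i) * (u (xs!(i-1)) * (\<Prod>k\<in>{..<d} - {i - 1, i}. u (xs!k)))"
      apply (subst prod.remove[OF fin(2), of "i-1"])
      using assms apply auto[1]
      apply (simp only: e)
      done
    finally have P: "tone u d xs = u (xs!i) * (u (xs!(i-1)) * (\<Prod>k\<in>{..<d} - {i - 1, i}. u (xs!k)))"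
      using True by (simp add: tone_eq)
    show ?thesis unfolding P using True by (simp add: emb_def t2 mult_ac)
  qed
qed

lemma emb_zero: "emb u d i (\<lambda>_. 0) = (\<lambda>_. 0)"
  by (auto simp: emb_def)

lemma tact_zero: "tact va w (\<lambda>_. 0) = (\<lambda>_. 0)"
  by (auto simp: tact_def bilin_def supp_def)

lemma supp_tone:
  "supp (tone u d) \<subseteq> {xs. set xs \<subseteq> supp u \<and> length xs = d}"
proof
  fix xs assume a: "xs \<in> supp (tone u d)"
  then have l: "length xs = d" and p: "(\<Prod>k<d. u (xs!k)) \<noteq> 0"
    by (auto simp: supp_def tone_eq split: if_splits)
  have "u (xs!k) \<noteq> 0" if "k < d" for k
    using p that by (auto intro: prod_zero)
  then have "set xs \<subseteq> supp u" using l by (auto simp: supp_def in_set_conv_nth)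
  then show "xs \<in> {xs. set xs \<subseteq> supp u \<and> length xs = d}" using l by simp
qed

lemma tone_kernel:
  assumes rm: "right_module m u va" and fu: "fsupp u" and ln: "length \<nu> = d"
  shows "(\<Sum>xs\<in>supp (tone u d). tone u d xs * tens (map2 va \<nu> xs) \<rho>) = delta \<nu> \<rho>"
proof -
  define L where "L = {xs. set xs \<subseteq> supp u \<and> length xs = d}"
  have fL: "finite L" unfolding L_def using fu finite_lists_length_eq by (auto simp: fsupp_def)
  have "(\<Sum>xs\<in>supp (tone u d). tone u d xs * tens (map2 va \<nu> xs) \<rho>) =
        (\<Sum>xs\<in>L. tone u d xs * tens (map2 va \<nu> xs) \<rho>)"
    using supp_tone[of u d] fL unfolding L_def
    by (intro sum.mono_neutral_left) (auto simp: supp_def)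
  also have "\<dots> = delta \<nu> \<rho>"
  proof (cases "length \<rho> = d")
    case True
    have lin: "(\<Sum>x\<in>supp u. u x * va i x j) = delta i j" for i j
      using rm unfolding right_module_def linext_def by (metis)
    have "(\<Sum>xs\<in>L. tone u d xs * tens (map2 va \<nu> xs) \<rho>) =
          (\<Sum>xs\<in>L. \<Prod>k<d. u (xs!k) * va (\<nu>!k) (xs!k) (\<rho>!k))"
      using True ln by (intro sum.cong refl) (auto simp: L_def tone_eq tens_map2 prod.distrib)
    also have "\<dots> = (\<Prod>k<d. \<Sum>x\<in>supp u. u x * va (\<nu>!k) x (\<rho>!k))"
      unfolding L_def using fu
      by (subst prod_sum_lists[where f="\<lambda>k x. u x * va (\<nu>!k) x (\<rho>!k)"]) (auto simp: fsupp_def)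
    also have "\<dots> = (\<Prod>k<d. delta (\<nu>!k) (\<rho>!k))" by (simp add: lin)
    also have "\<dots> = delta \<nu> \<rho>" using prod_delta[OF ln True] .
    finally show ?thesis .
  next
    case False
    then have "\<rho> \<noteq> \<nu>" using ln by auto
    then show ?thesis using False ln by (auto simp: L_def tens_map2 delta_apply intro!: sum.neutral)
  qed
  finally show ?thesis .
qed

lemma tact_tone:
  assumes rm: "right_module m u va" and fu: "fsupp u"
    and fw: "finite (supp w)" and lw: "\<forall>x\<in>supp w. length x = d"
  shows "tact va w (tone u d) = w"
proof
  fix \<rho>
  have "tact va w (tone u d) \<rho> = (\<Sum>\<nu>\<in>supp w. w \<nu> * (\<Sum>xs\<in>supp (tone u d). tone u d xs * tens (map2 va \<nu> xs) \<rho>))"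
    unfolding tact_def bilin_def by (simp add: sum_distrib_left mult_ac)
  also have "\<dots> = (\<Sum>\<nu>\<in>supp w. if \<nu> = \<rho> then w \<rho> else 0)"
    using lw by (intro sum.cong refl) (auto simp: tone_kernel[OF rm fu] delta_apply)
  also have "\<dots> = w \<rho>" using fw by (simp add: sum.delta supp_def)
  finally show "tact va w (tone u d) \<rho> = w \<rho>" .
qed

lemma tact_fl:
  assumes vf: "\<forall>i x. fsupp (va i x)"
    and fw: "finite (supp w)" and lw: "\<forall>x\<in>supp w. length x = d" and b: "b \<in> tpow d"
  shows "finite (supp (tact va w b))" "\<forall>x\<in>supp (tact va w b). length x = d"
proof -
  define C where "C = (\<Union>\<nu>\<in>supp w. \<Union>xs\<in>supp b. \<Union>k\<in>{..<d}. supp (va (\<nu>!k) (xs!k)))"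
  have fC: "finite C" unfolding C_def using fw tpow_fin'[OF b] vf by (auto simp: fsupp_def)
  have key: "set \<rho> \<subseteq> C \<and> length \<rho> = d" if "\<rho> \<in> supp (tact va w b)" for \<rho>
  proof -
    have "(\<Sum>\<nu>\<in>supp w. \<Sum>xs\<in>supp b. w \<nu> * b xs * tens (map2 va \<nu> xs) \<rho>) \<noteq> 0"
      using that by (simp add: supp_def tact_def bilin_def)
    then obtain \<nu> where n: "\<nu> \<in> supp w" "(\<Sum>xs\<in>supp b. w \<nu> * b xs * tens (map2 va \<nu> xs) \<rho>) \<noteq> 0"
      by (meson sum.not_neutral_contains_not_neutral)
    then obtain xs where x: "xs \<in> supp b" "w \<nu> * b xs * tens (map2 va \<nu> xs) \<rho> \<noteq> 0"
      by (meson sum.not_neutral_contains_not_neutral)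
    have ln: "length \<nu> = d" using lw n(1) by blast
    have lx: "length xs = d" using tpow_len'[OF b] x(1) by blast
    have t: "tens (map2 va \<nu> xs) \<rho> \<noteq> 0" using x(2) by auto
    then have lr: "length \<rho> = d" using ln lx by (auto simp: tens_map2 split: if_splits)
    have pr: "(\<Prod>k<d. va (\<nu>!k) (xs!k) (\<rho>!k)) \<noteq> 0" using t lr ln lx by (simp add: tens_map2)
    have "va (\<nu>!k) (xs!k) (\<rho>!k) \<noteq> 0" if "k < d" for k
      using pr that by (auto intro: prod_zero)
    then have "\<rho>!k \<in> C" if "k < d" for k
      using that n(1) x(1) unfolding C_def supp_def by blast
    then show ?thesis using lr by (auto simp: in_set_conv_nth)
  qed
  have "supp (tact va w b) \<subseteq> {\<rho>. set \<rho> \<subseteq> C \<and> length \<rho> = d}" using key by blast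
  then show "finite (supp (tact va w b))" using finite_lists_length_eq[OF fC] finite_subset by blast
  show "\<forall>x\<in>supp (tact va w b). length x = d" using key by blast
qed



lemma W_fl:
  assumes vf: "\<forall>i x. fsupp (va i x)" and w: "w \<in> Wsub va d \<mu>"
  shows "finite (supp w)" "\<forall>x\<in>supp w. length x = d"
proof -
  obtain p where p: "\<forall>\<nu>. p \<nu> \<in> tpow d" and wp: "w = (\<lambda>\<rho>. \<Sum>\<nu>\<in>orbit d \<mu>. tact va (delta \<nu>) (p \<nu>) \<rho>)"
    using w unfolding Wsub_def by blast
  have fl: "finite (supp (tact va (delta \<nu>) (p \<nu>)))" "\<forall>x\<in>supp (tact va (delta \<nu>) (p \<nu>)). length x = d"
    if "\<nu> \<in> orbit d \<mu>" for \<nu>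
  proof -
    have f: "finite (supp (delta \<nu>))" using supp_delta' finite_subset by fastforce
    have l: "\<forall>x\<in>supp (delta \<nu>). length x = d" using supp_delta' orbit_length[OF that] by fastforce
    show "finite (supp (tact va (delta \<nu>) (p \<nu>)))" "\<forall>x\<in>supp (tact va (delta \<nu>) (p \<nu>)). length x = d"
      using tact_fl[OF vf f l p[rule_format]] by auto
  qed
  have sub: "supp w \<subseteq> (\<Union>\<nu>\<in>orbit d \<mu>. supp (tact va (delta \<nu>) (p \<nu>)))"
  proof
    fix \<rho> assume "\<rho> \<in> supp w"
    then have "(\<Sum>\<nu>\<in>orbit d \<mu>. tact va (delta \<nu>) (p \<nu>) \<rho>) \<noteq> 0" by (simp add: supp_def wp)
    then obtain \<nu> where "\<nu> \<in> orbit d \<mu>" "tact va (delta \<nu>) (p \<nu>) \<rho> \<noteq> 0"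
      by (meson sum.not_neutral_contains_not_neutral)
    then show "\<rho> \<in> (\<Union>\<nu>\<in>orbit d \<mu>. supp (tact va (delta \<nu>) (p \<nu>)))" by (auto simp: supp_def)
  qed
  show "finite (supp w)" using sub fl(1) orbit_finite by (meson finite_UN_I finite_subset)
  show "\<forall>x\<in>supp w. length x = d" using sub fl(2) by blast
qed

lemma W_sig:
  assumes w: "w \<in> Wsub va d \<mu>" and i: "1 \<le> i" "i < d"
  shows "sig i w \<in> Wsub va d \<mu>"
proof -
  obtain p where p: "\<forall>\<nu>. p \<nu> \<in> tpow d" and wp: "w = (\<lambda>\<rho>. \<Sum>\<nu>\<in>orbit d \<mu>. tact va (delta \<nu>) (p \<nu>) \<rho>)"
    using w unfolding Wsub_def by blast
  define p' where "p' = (\<lambda>\<nu>. sig i (p (swp i \<nu>)))"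
  have p': "\<forall>\<nu>. p' \<nu> \<in> tpow d" unfolding p'_def using p i by (blast intro: sig_tpow)
  have "sig i w = (\<lambda>\<rho>. \<Sum>\<nu>\<in>orbit d \<mu>. tact va (delta \<nu>) (p' \<nu>) \<rho>)"
  proof
    fix \<rho>
    have "sig i w \<rho> = (\<Sum>\<nu>\<in>orbit d \<mu>. tact va (delta \<nu>) (p \<nu>) (swp i \<rho>))"
      by (simp add: sig_def wp)
    also have "\<dots> = (\<Sum>\<nu>\<in>orbit d \<mu>. tact va (delta (swp i \<nu>)) (sig i (p \<nu>)) \<rho>)"
    proof (intro sum.cong refl)
      fix \<nu> assume n: "\<nu> \<in> orbit d \<mu>"
      have l: "\<forall>x\<in>supp (delta \<nu>). length x = d" using supp_delta' orbit_length[OF n] by fastforce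
      show "tact va (delta \<nu>) (p \<nu>) (swp i \<rho>) = tact va (delta (swp i \<nu>)) (sig i (p \<nu>)) \<rho>"
        using tact_swp[OF l tpow_len'[OF p[rule_format, of \<nu>]] i, of va \<rho>]
        unfolding sig_delta[OF orbit_length[OF n] i] .
    qed
    also have "\<dots> = (\<Sum>\<nu>\<in>orbit d \<mu>. tact va (delta (swp i \<nu>)) (p' (swp i \<nu>)) \<rho>)"
    proof (intro sum.cong refl)
      fix \<nu> assume n: "\<nu> \<in> orbit d \<mu>"
      have "swp i (swp i \<nu>) = \<nu>" using i orbit_length[OF n] by (intro swp_swp) auto
      then show "tact va (delta (swp i \<nu>)) (sig i (p \<nu>)) \<rho> = tact va (delta (swp i \<nu>)) (p' (swp i \<nu>)) \<rho>"
        by (simp add: p'_def)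
    qed
    also have "\<dots> = (\<Sum>\<nu>\<in>swp i ` orbit d \<mu>. tact va (delta \<nu>) (p' \<nu>) \<rho>)"
      by (simp add: sum.reindex[OF orbit_swp_image(2)[OF i]])
    also have "\<dots> = (\<Sum>\<nu>\<in>orbit d \<mu>. tact va (delta \<nu>) (p' \<nu>) \<rho>)"
      by (simp add: orbit_swp_image(1)[OF i])
    finally show "sig i w \<rho> = (\<Sum>\<nu>\<in>orbit d \<mu>. tact va (delta \<nu>) (p' \<nu>) \<rho>)" .
  qed
  then show ?thesis unfolding Wsub_def using p' by blast
qed

lemma part_b:
  fixes \<mu> :: "'i::linorder list" and va :: "'i \<Rightarrow> 'x \<Rightarrow> 'i \<Rightarrow> 'k::comm_ring_1"
  assumes rm: "right_module m u va" and fu: "fsupp u"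
    and S: "S = (\<lambda>_. 0)" and R: "R = tone u 2" and lm: "length \<mu> = d"
  shows "extends_to_qwp_module u va d \<mu> S R"
proof -
  have vf: "\<forall>i x. fsupp (va i x)" using rm by (simp add: right_module_def)
  define WW where "WW = Wsub va d \<mu>"
  have fl: "finite (supp w)" "\<forall>x\<in>supp w. length x = d" if "w \<in> WW" for w
    using W_fl[OF vf] that unfolding WW_def by auto
  have zero: "w x = 0" if "w \<in> WW" "length x \<noteq> d" for w x
    using fl(2)[OF that(1)] that(2) by (auto simp: supp_def)
  have mod: "qwp_module_on u va d S R WW sig"
    unfolding qwp_module_on_def
  proof (intro conjI ballI allI impI)
    fix i w assume i: "i \<in> {1..<d}" and w: "w \<in> WW"
    then show "sig i w \<in> WW" using W_sig unfolding WW_def by auto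
  next
    fix i w w' show "sig i (\<lambda>\<nu>. w \<nu> + w' \<nu>) = (\<lambda>\<nu>. sig i w \<nu> + sig i w' \<nu>)"
      by (simp add: sig_def)
  next
    fix i w c show "sig i (\<lambda>\<nu>. c * w \<nu>) = (\<lambda>\<nu>. c * sig i w \<nu>)"
      by (simp add: sig_def)
  next
    fix i w and b :: "'x list \<Rightarrow> 'k" assume i: "i \<in> {1..<d}" and w: "w \<in> WW" and b: "b \<in> tpow d"
    have lb: "\<forall>x\<in>supp (sig i b). length x = d" using supp_len_sig tpow_len'[OF b] by blast
    have i': "1 \<le> i" "i < d" using i by auto
    show "tact va (sig i w) b = sig i (tact va w (sig i b))"
    proof
      fix \<rho>
      have "sig i (tact va w (sig i b)) \<rho> = tact va (sig i w) (sig i (sig i b)) \<rho>"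
        unfolding sig_def[of i "tact va w (sig i b)"] using tact_swp[OF fl(2)[OF w] lb i'] by simp
      then show "tact va (sig i w) b \<rho> = sig i (tact va w (sig i b)) \<rho>"
        using sig_sig[OF tpow_len'[OF b] i'] by simp
    qed
  next
    fix i w assume i: "i \<in> {1..<d}" and w: "w \<in> WW"
    have i': "1 \<le> i" "i < d" using i by auto
    have "sig i (sig i w) = w" using sig_sig[OF fl(2)[OF w] i'] .
    moreover have "tact va w (emb u d i R) = w"
      unfolding R emb_tone2[OF i'] using tact_tone[OF rm fu fl[OF w]] .
    moreover have "sig i (tact va w (emb u d i S)) = (\<lambda>_. 0)"
      unfolding S emb_zero tact_zero by (simp add: sig_def)
    ultimately show "sig i (sig i w) = (\<lambda>\<nu>. sig i (tact va w (emb u d i S)) \<nu> + tact va w (emb u d i R) \<nu>)"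
      by simp
  next
    fix k w assume k: "1 \<le> k \<and> k + 1 < d" and w: "w \<in> WW"
    show "sig k (sig (k + 1) (sig k w)) = sig (k + 1) (sig k (sig (k + 1) w))"
    proof
      fix \<rho>
      show "sig k (sig (k + 1) (sig k w)) \<rho> = sig (k + 1) (sig k (sig (k + 1) w)) \<rho>"
      proof (cases "length \<rho> = d")
        case True then show ?thesis using k swp_braid[of k \<rho>] by (simp add: sig_def)
      next
        case False then show ?thesis
          using zero[OF w, of "swp k (swp (k+1) (swp k \<rho>))"] zero[OF w, of "swp (k+1) (swp k (swp (k+1) \<rho>))"]
          by (simp add: sig_def)
      qed
    qed
  next
    fix i j w assume i: "i \<in> {1..<d}" and j: "j \<in> {1..<d}" and ij: "i + 2 \<le> j \<or> j + 2 \<le> i"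
      and w: "w \<in> WW"
    show "sig i (sig j w) = sig j (sig i w)"
    proof
      fix \<rho>
      show "sig i (sig j w) \<rho> = sig j (sig i w) \<rho>"
      proof (cases "length \<rho> = d")
        case True then show ?thesis using i j ij swp_comm[of i \<rho> j] by (simp add: sig_def)
      next
        case False then show ?thesis
          using zero[OF w, of "swp j (swp i \<rho>)"] zero[OF w, of "swp i (swp j \<rho>)"]
          by (simp add: sig_def)
      qed
    qed
  qed
  have rule: "qwp_rule u va d \<mu> S R sig"
    unfolding qwp_rule_def
  proof (intro ballI conjI impI)
    fix i \<nu> assume i: "i \<in> {1..<d}" and n: "\<nu> \<in> orbit d \<mu>"
    have i': "1 \<le> i" "i < d" using i by auto
    have ln: "length \<nu> = d" using orbit_length[OF n] .
    show "sig i (delta \<nu>) = delta (swp i \<nu>)" using sig_delta[OF ln i'] .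
    have f: "finite (supp (delta (swp i \<nu>)))" using supp_delta' finite_subset by fastforce
    have l: "\<forall>x\<in>supp (delta (swp i \<nu>)). length x = d" using supp_delta' ln by fastforce
    show "sig i (delta \<nu>) =
       (\<lambda>\<rho>. tact va (delta (swp i \<nu>)) (emb u d i R) \<rho> + tact va (delta \<nu>) (emb u d i S) \<rho>)"
      unfolding R S emb_tone2[OF i'] emb_zero tact_zero tact_tone[OF rm fu f l] sig_delta[OF ln i']
      by simp
  qed
  show ?thesis unfolding extends_to_qwp_module_def using mod rule WW_def by blast
qed


theorem proposition7p3:
  fixes m :: "'x \<Rightarrow> 'x \<Rightarrow> 'x \<Rightarrow> 'k::comm_ring_1"
    and u :: "'x \<Rightarrow> 'k"
    and S R :: "'x list \<Rightarrow> 'k"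
    and va :: "'i::linorder \<Rightarrow> 'x \<Rightarrow> 'i \<Rightarrow> 'k"
    and d :: nat and \<mu> :: "'i list"
  assumes "free_algebra m u"
    and "qwp_flip_conditions m u S R"
    and "2 \<le> d"
    and "right_module m u va"
    and "length \<mu> = d" and "sorted_wrt (<) \<mu>"
  shows "((\<exists>\<epsilon> :: 'x \<Rightarrow> 'k. alg_hom_to_K m u \<epsilon> \<and>
              (\<forall>i x. va i x = (\<lambda>j. \<epsilon> x * delta i j)) \<and>
              (\<exists>r :: 'k. r * r = eps2 \<epsilon> S * r + eps2 \<epsilon> R))
           \<longrightarrow> extends_to_qwp_module u va d \<mu> S R)
       \<and> ((S = (\<lambda>_. 0) \<and> R = tone u 2) \<longrightarrow> extends_to_qwp_module u va d \<mu> S R)"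
proof (intro conjI impI)
  assume "\<exists>\<epsilon> :: 'x \<Rightarrow> 'k. alg_hom_to_K m u \<epsilon> \<and>
              (\<forall>i x. va i x = (\<lambda>j. \<epsilon> x * delta i j)) \<and>
              (\<exists>r :: 'k. r * r = eps2 \<epsilon> S * r + eps2 \<epsilon> R)"
  then obtain \<epsilon> :: "'x \<Rightarrow> 'k" where va: "\<forall>i x. va i x = (\<lambda>j. \<epsilon> x * delta i j)" by blast
  show "extends_to_qwp_module u va d \<mu> S R"
    by (rule part_a[OF va assms(3) assms(5) assms(6)])
next
  assume "S = (\<lambda>_. 0) \<and> R = tone u 2"
  then have S: "S = (\<lambda>_. 0)" and R: "R = tone u 2" by auto
  have fu: "fsupp u" using assms(1) by (simp add: free_algebra_def)
  show "extends_to_qwp_module u va d \<mu> S R"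
    by (rule part_b[OF assms(4) fu S R assms(5)])
qed

end
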